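(* Let $C$ be a circuit over variables $x_1,\dots,x_n$ that may also contain gates computing the constants $0$ and $1$, and suppose that (as a function of $x_1,\dots,x_n$) $C$ does not imply any variable $x_i$ and is not implied by any variable $x_i$. Let $u,v$ be new variables, let $C(x_1,\dots,x_n,u,v)$ denote the circuit obtained from $C$ by replacing every constant-$1$ gate by $u$ and every constant-$0$ gate by $v$, and let $C'=t_2(u,C(x_1,\dots,x_n,u,v),v)$. Then $\{u,v\}$ is the only dominant pair for $C'$.
   Context: $t_2(x,y,z)=(x\wedge y)\vee(x\wedge z)\vee(y\wedge z)$ is the ternary majority function. A circuit $C$ implies a variable $x$ if every satisfying assignment of $C$ sets $x$ to 1; $C$ is implied by $x$ if every assignment setting $x$ to 1 satisfies $C$. A pair of two distinct variables $\{s,t\}$ is dominant for a circuit $C$ if for every $\alpha\in\{0,1\}$ and every truth assignment $I$ with $I(s)=I(t)=\alpha$, $I$ satisfies $C$ if and only if $\alpha=1$. *)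

theory Defs
  imports Main
begin

text \<open>Boolean circuits (represented as formula trees) over variables of type 'v.
  A gate applies an arbitrary Boolean function to the values of its inputs;
  constant gates compute 0 or 1.\<close>
datatype 'v circ =
    Var 'v
  | Const bool
  | Gate "bool list \<Rightarrow> bool" "'v circ list"

fun eval :: "('v \<Rightarrow> bool) \<Rightarrow> 'v circ \<Rightarrow> bool" where
  "eval I (Var x) = I x"
| "eval I (Const b) = b"
| "eval I (Gate f cs) = f (map (eval I) cs)"

fun vars :: "'v circ \<Rightarrow> 'v set" where
  "vars (Var x) = {x}"
| "vars (Const b) = {}"
| "vars (Gate f cs) = (\<Union>c\<in>set cs. vars c)"

fun subst_consts :: "'v \<Rightarrow> 'v \<Rightarrow> 'v circ \<Rightarrow> 'v circ" where
  "subst_consts u v (Var x) = Var x"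
| "subst_consts u v (Const b) = (if b then Var u else Var v)"
| "subst_consts u v (Gate f cs) = Gate f (map (subst_consts u v) cs)"

definition t2 :: "bool \<Rightarrow> bool \<Rightarrow> bool \<Rightarrow> bool" where
  "t2 x y z \<longleftrightarrow> (x \<and> y) \<or> (x \<and> z) \<or> (y \<and> z)"

definition t2_gate :: "'v circ \<Rightarrow> 'v circ \<Rightarrow> 'v circ \<Rightarrow> 'v circ" where
  "t2_gate a b c = Gate (\<lambda>bs. case bs of [x, y, z] \<Rightarrow> t2 x y z | _ \<Rightarrow> False) [a, b, c]"

definition implies_var :: "'v circ \<Rightarrow> 'v \<Rightarrow> bool" where
  "implies_var C x \<longleftrightarrow> (\<forall>I. eval I C \<longrightarrow> I x)"

definition implied_by_var :: "'v circ \<Rightarrow> 'v \<Rightarrow> bool" where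
  "implied_by_var C x \<longleftrightarrow> (\<forall>I. I x \<longrightarrow> eval I C)"

definition dominant_pair :: "'v circ \<Rightarrow> 'v \<Rightarrow> 'v \<Rightarrow> bool" where
  "dominant_pair C s t \<longleftrightarrow> s \<noteq> t \<and>
     (\<forall>\<alpha> I. I s = \<alpha> \<and> I t = \<alpha> \<longrightarrow> (eval I C \<longleftrightarrow> \<alpha>))"

end

theory Submission
  imports Defs
begin

lemma eval_t2g: "eval I (t2_gate a b c) = t2 (eval I a) (eval I b) (eval I c)"
  by (simp add: t2_gate_def)

lemma eval_subst: "I u \<Longrightarrow> \<not> I v \<Longrightarrow> eval I (subst_consts u v C) = eval I C"
proof (induction C)
  case (Gate f cs)
  then have "map (eval I) (map (subst_consts u v) cs) = map (eval I) cs" by auto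
  then show ?case by (simp only: eval.simps subst_consts.simps)
qed auto

lemma eval_agree: "(\<forall>x\<in>vars C. I x = J x) \<Longrightarrow> eval I C = eval J C"
proof (induction C)
  case (Gate f cs)
  then have "map (eval I) cs = map (eval J) cs" by auto
  then show ?case by (simp only: eval.simps)
qed auto

lemma dom_sym: "dominant_pair C s t = dominant_pair C t s"
  unfolding dominant_pair_def by blast

theorem lemma4p10:
  fixes C :: "'v circ" and X :: "'v set" and u v :: 'v
  assumes "finite X"
    and "vars C \<subseteq> X"
    and "u \<notin> X" and "v \<notin> X" and "u \<noteq> v"
    and "\<forall>x\<in>X. \<not> implies_var C x \<and> \<not> implied_by_var C x"
  shows "\<forall>s\<in>X \<union> {u, v}. \<forall>t\<in>X \<union> {u, v}.
           dominant_pair (t2_gate (Var u) (subst_consts u v C) (Var v)) s t \<longleftrightarrow> {s, t} = {u, v}"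
proof -
  define C' where "C' = t2_gate (Var u) (subst_consts u v C) (Var v)"
  have duv: "dominant_pair C' u v"
    unfolding dominant_pair_def C'_def eval_t2g t2_def using assms(5) by auto
  have agr: "eval (J(u:=True, v:=False)) C = eval J C" for J
    using assms(2,3,4) by (intro eval_agree) auto
  have ev: "eval (J(u:=True, v:=False)) C' = eval J C" for J
    unfolding C'_def eval_t2g t2_def using assms(5)
    by (simp add: eval_subst agr)
  have nX: "\<not> dominant_pair C' s t" if "s \<in> X" "t \<in> X" for s t
  proof
    assume d: "dominant_pair C' s t"
    let ?I = "(\<lambda>_. False)(s:=True, t:=True)"
    have "s \<noteq> u" "s \<noteq> v" "t \<noteq> u" "t \<noteq> v" using that assms(3,4) by auto
    hence "eval ?I C' = False" unfolding C'_def eval_t2g t2_def by simp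
    moreover have "eval ?I C' = True" using d unfolding dominant_pair_def by auto
    ultimately show False by simp
  qed
  have nU: "\<not> dominant_pair C' u x" if xX: "x \<in> X" for x
  proof
    assume d: "dominant_pair C' u x"
    obtain J where J: "J x" "\<not> eval J C" using assms(6) xX unfolding implied_by_var_def by auto
    let ?I = "J(u:=True, v:=False)"
    have "x \<noteq> u" "x \<noteq> v" using xX assms(3,4) by auto
    hence "?I u = True" "?I x = True" using J assms(5) by auto
    hence "eval ?I C' = True" using d unfolding dominant_pair_def by (metis (no_types))
    thus False using ev J by simp
  qed
  have nV: "\<not> dominant_pair C' v x" if xX: "x \<in> X" for x
  proof
    assume d: "dominant_pair C' v x"
    obtain J where J: "\<not> J x" "eval J C" using assms(6) xX unfolding implies_var_def by auto
    let ?I = "J(u:=True, v:=False)"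
    have "x \<noteq> u" "x \<noteq> v" using xX assms(3,4) by auto
    hence "?I v = False" "?I x = False" using J assms(5) by auto
    hence "eval ?I C' = False" using d unfolding dominant_pair_def by (metis (no_types))
    thus False using ev J by simp
  qed
  have ss: "\<not> dominant_pair C' s s" for s unfolding dominant_pair_def by simp
  show ?thesis unfolding C'_def[symmetric]
  proof (intro ballI)
    fix s t assume s: "s \<in> X \<union> {u, v}" and t: "t \<in> X \<union> {u, v}"
    show "dominant_pair C' s t \<longleftrightarrow> {s, t} = {u, v}"
    proof (cases "{s, t} = {u, v}")
      case True
      hence "(s = u \<and> t = v) \<or> (s = v \<and> t = u)" by (simp add: doubleton_eq_iff)
      thus ?thesis using True duv dom_sym[of C' u v] by blast
    next
      case False
      have "\<not> dominant_pair C' s t"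
      proof (cases "s = t")
        case True thus ?thesis using ss by simp
      next
        case st: False
        show ?thesis
        proof (cases "s \<in> X")
          case sX: True
          show ?thesis
          proof (cases "t \<in> X")
            case True thus ?thesis using nX sX by blast
          next
            case False
            hence "t = u \<or> t = v" using t by blast
            thus ?thesis using nU[OF sX] nV[OF sX] dom_sym[of C' s t] by blast
          qed
        next
          case sX: False
          hence su: "s = u \<or> s = v" using s by blast
          show ?thesis
          proof (cases "t \<in> X")
            case True thus ?thesis using nU nV su by blast
          next
            case False
            hence "t = u \<or> t = v" using t by blast
            thus ?thesis using su st \<open>{s, t} \<noteq> {u, v}\<close> by auto
          qed
        qed
      qed
      thus ?thesis using False by simp
    qed
  qed
qed

end
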